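(* Let $(\Omega,\mathcal{F},P,T)$ be an ergodic measure preserving system with $(\Omega,\mathcal{F})$ a standard measurable space. The following are equivalent: (i) there exists $B\in\mathcal{F}$ with $P(B)>0$ such that for every $C\in\mathcal{F}$ with $C\subset B$, $\lim_{n\to\infty}\frac{1}{n}\sum_{i=0}^{n-1}P^{1/2}(B\cap T^{-i}C)=P^{1/2}(B)P(C)$; (ii) $P$ is periodic, i.e. there exist $r\in\mathbb{N}$ and distinct points $\omega_1,\dots,\omega_r\in\Omega$ with $P(\{\omega_i\})=\frac{1}{r}$ for $i=1,\dots,r$. In this case (with $B$ as in (i)), $r=\frac{1}{P(B)}\in\mathbb{N}$.
   Context: A measure preserving system is a probability space $(\Omega,\mathcal{F},P)$ with measurable $T:\Omega\to\Omega$ and $P(T^{-1}A)=P(A)$ for all $A$; it is ergodic if $P(A)\in\{0,1\}$ whenever $T^{-1}A=A$. A measurable space is standard if isomorphic to a complete separable metric space with its Borel $\sigma$-algebra. $P^{1/2}(A)=(P(A))^{1/2}$. *)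

theory Defs
  imports "HOL-Probability.Probability"
begin

text \<open>A measurable space is standard if it is isomorphic to a complete separable
  metric space with its Borel sigma-algebra; transporting the metric along the
  isomorphism, equivalently the underlying set carries a complete separable metric
  whose open sets generate the sigma-algebra.\<close>
definition standard_space :: "'a measure \<Rightarrow> bool" where
  "standard_space M \<longleftrightarrow> (\<exists>d. Metric_space (space M) d \<and>
      Metric_space.mcomplete (space M) d \<and>
      separable_space (Metric_space.mtopology (space M) d) \<and>
      sets M = sigma_sets (space M) {U. openin (Metric_space.mtopology (space M) d) U})"

definition measure_preserving_system :: "'a measure \<Rightarrow> ('a \<Rightarrow> 'a) \<Rightarrow> bool" where
  "measure_preserving_system M T \<longleftrightarrow> prob_space M \<and> T \<in> measurable M M \<and>
     (\<forall>A\<in>sets M. measure M (T -` A \<inter> space M) = measure M A)"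

definition ergodic_system :: "'a measure \<Rightarrow> ('a \<Rightarrow> 'a) \<Rightarrow> bool" where
  "ergodic_system M T \<longleftrightarrow> measure_preserving_system M T \<and>
     (\<forall>A\<in>sets M. T -` A \<inter> space M = A \<longrightarrow> measure M A = 0 \<or> measure M A = 1)"

definition cond_i :: "'a measure \<Rightarrow> ('a \<Rightarrow> 'a) \<Rightarrow> 'a set \<Rightarrow> bool" where
  "cond_i M T B \<longleftrightarrow> B \<in> sets M \<and> measure M B > 0 \<and>
     (\<forall>C\<in>sets M. C \<subseteq> B \<longrightarrow>
        (\<lambda>n. (1 / real n) * (\<Sum>i<n. sqrt (measure M (B \<inter> ((T ^^ i) -` C \<inter> space M)))))
          \<longlonglongrightarrow> sqrt (measure M B) * measure M C)"

definition periodic_with :: "'a measure \<Rightarrow> nat \<Rightarrow> (nat \<Rightarrow> 'a) \<Rightarrow> bool" where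
  "periodic_with M r \<omega> \<longleftrightarrow> r \<ge> 1 \<and> inj_on \<omega> {1..r} \<and>
     (\<forall>i\<in>{1..r}. \<omega> i \<in> space M \<and> measure M {\<omega> i} = 1 / real r)"

end

theory Submission
  imports Defs
begin

lemma mps_prob: "measure_preserving_system M T \<Longrightarrow> prob_space M"
  by (simp add: measure_preserving_system_def)

lemma mps_meas: "measure_preserving_system M T \<Longrightarrow> T \<in> measurable M M"
  by (simp add: measure_preserving_system_def)

lemma mps_funpow:
  assumes mps: "measure_preserving_system M T" and A: "A \<in> sets M"
  shows "measure M ((T^^i) -` A \<inter> space M) = measure M A"
  using A
proof (induction i arbitrary: A)
  case 0
  then show ?case using sets.sets_into_space by (simp add: Int_absorb2)
next
  case (Suc i)
  have Tm: "T \<in> measurable M M" using mps by (simp add: measure_preserving_system_def)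
  have sp: "x \<in> space M \<Longrightarrow> T x \<in> space M" for x using Tm by (meson measurable_space)
  have "(T^^Suc i) -` A \<inter> space M = T -` ((T^^i) -` A \<inter> space M) \<inter> space M"
    using sp by (auto simp: funpow_Suc_right funpow_swap1)
  moreover have X: "(T^^i) -` A \<inter> space M \<in> sets M"
    using measurable_compose_n[OF Tm] Suc.prems by (meson measurable_sets)
  ultimately have "measure M ((T^^Suc i) -` A \<inter> space M) = measure M ((T^^i) -` A \<inter> space M)"
    using mps unfolding measure_preserving_system_def by presburger
  then show ?case using Suc.IH[OF Suc.prems] by (simp add: o_def)
qed

lemma funpow_sets:
  assumes mps: "measure_preserving_system M T" and A: "A \<in> sets M"
  shows "(T^^i) -` A \<inter> space M \<in> sets M"
  using measurable_compose_n[OF mps_meas[OF mps]] A by (meson measurable_sets)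

lemma keyP:
  assumes mps: "measure_preserving_system M T" and ci: "cond_i M T B"
    and fin: "finite CC" and disj: "disjoint CC" and sub: "CC \<subseteq> sets M" and un: "\<Union>CC = B"
  shows "\<exists>C\<in>CC. measure M C \<ge> measure M B ^ 3"
proof -
  interpret prob_space M using mps_prob[OF mps] .
  define a where "a i C = measure M (B \<inter> ((T^^i) -` C \<inter> space M))" for i C
  define PB where "PB = measure M B"
  define L where "L = sqrt PB * PB"
  have Bs: "B \<in> sets M" and PBpos: "PB > 0" using ci by (auto simp: cond_i_def PB_def)
  have ne: "CC \<noteq> {}" using un PBpos by (auto simp: PB_def)
  define m where "m = Max (measure M ` CC)"
  have mge: "C \<in> CC \<Longrightarrow> measure M C \<le> m" for C using fin by (simp add: m_def)
  obtain C0 where C0: "C0 \<in> CC" "measure M C0 = m"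
  proof -
    have "m \<in> measure M ` CC" using Max_in[of "measure M ` CC"] fin ne by (simp add: m_def)
    then show ?thesis using that by blast
  qed
  have a_le: "C \<in> CC \<Longrightarrow> a i C \<le> m" for i C
  proof -
    assume C: "C \<in> CC"
    have "a i C \<le> measure M ((T^^i) -` C \<inter> space M)"
      unfolding a_def using C sub by (intro finite_measure_mono funpow_sets[OF mps]) auto
    also have "\<dots> = measure M C" using mps_funpow[OF mps] C sub by auto
    finally show ?thesis using mge[OF C] by simp
  qed
  have a_nn: "a i C \<ge> 0" for i C by (simp add: a_def)
  have s_sum: "a i B = (\<Sum>C\<in>CC. a i C)" for i
  proof -
    have "B \<inter> ((T^^i) -` B \<inter> space M) = (\<Union>C\<in>CC. B \<inter> ((T^^i) -` C \<inter> space M))"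
      using un by auto
    moreover have "measure M (\<Union>C\<in>CC. B \<inter> ((T^^i) -` C \<inter> space M)) = (\<Sum>C\<in>CC. a i C)"
      unfolding a_def
    proof (rule measure_finite_Union)
      show "finite CC" by fact
      show "(\<lambda>C. B \<inter> ((T ^^ i) -` C \<inter> space M)) ` CC \<subseteq> sets M"
        using sub Bs funpow_sets[OF mps] by auto
      show "disjoint_family_on (\<lambda>C. B \<inter> ((T ^^ i) -` C \<inter> space M)) CC"
        using disj unfolding disjoint_family_on_def disjoint_def by blast
      show "\<And>C. C \<in> CC \<Longrightarrow> emeasure M (B \<inter> ((T ^^ i) -` C \<inter> space M)) \<noteq> \<infinity>" by simp
    qed
    ultimately show ?thesis by (simp add: a_def)
  qed
  have PB_sum: "PB = (\<Sum>C\<in>CC. measure M C)"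
  proof -
    have "measure M (\<Union>C\<in>CC. C) = (\<Sum>C\<in>CC. measure M C)"
      by (rule measure_finite_Union) (use fin sub disj in \<open>auto simp: disjoint_family_on_def disjoint_def\<close>)
    then show ?thesis by (simp add: PB_def un[symmetric])
  qed
  have lim_C: "(\<lambda>n. 1 / real n * (\<Sum>i<n. sqrt (a i C))) \<longlonglongrightarrow> sqrt PB * measure M C"
    if "C \<in> CC" for C
    using ci that sub un unfolding cond_i_def a_def PB_def by blast
  have lim_B: "(\<lambda>n. 1 / real n * (\<Sum>i<n. sqrt (a i B))) \<longlonglongrightarrow> L"
    using ci Bs unfolding cond_i_def a_def L_def PB_def by blast
  have lim_A: "(\<lambda>n. \<Sum>C\<in>CC. 1 / real n * (\<Sum>i<n. sqrt (a i C))) \<longlonglongrightarrow> L"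
  proof -
    have "(\<lambda>n. \<Sum>C\<in>CC. 1 / real n * (\<Sum>i<n. sqrt (a i C))) \<longlonglongrightarrow> (\<Sum>C\<in>CC. sqrt PB * measure M C)"
      by (intro tendsto_sum lim_C)
    also have "(\<Sum>C\<in>CC. sqrt PB * measure M C) = L"
      by (simp add: L_def PB_sum sum_distrib_left)
    finally show ?thesis .
  qed
  have ineq: "(1 / real n * (\<Sum>i<n. sqrt (a i B)))^2 \<le> sqrt m * (\<Sum>C\<in>CC. 1 / real n * (\<Sum>i<n. sqrt (a i C)))" for n
  proof (cases "n = 0")
    case True then show ?thesis by simp
  next
    case False
    have "(\<Sum>i<n. sqrt (a i B))^2 \<le> (\<Sum>i<n. (sqrt (a i B))^2) * n"
      using sum_squared_le_sum_of_squares[of "\<lambda>i. sqrt (a i B)" "{..<n}"] by simp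
    also have "\<dots> = (\<Sum>i<n. a i B) * n" using a_nn by simp
    finally have cs: "(\<Sum>i<n. sqrt (a i B))^2 \<le> (\<Sum>i<n. a i B) * n" .
    have "(\<Sum>i<n. a i B) \<le> (\<Sum>i<n. \<Sum>C\<in>CC. sqrt m * sqrt (a i C))"
    proof (intro sum_mono, unfold s_sum, intro sum_mono)
      fix i C assume "C \<in> CC"
      then have "a i C \<le> m" by (rule a_le)
      then have "sqrt (a i C) \<le> sqrt m" by simp
      then have "sqrt (a i C) * sqrt (a i C) \<le> sqrt m * sqrt (a i C)"
        by (rule mult_right_mono) (simp add: a_nn)
      then show "a i C \<le> sqrt m * sqrt (a i C)" using a_nn[of i C] by simp
    qed
    also have "\<dots> = sqrt m * (\<Sum>C\<in>CC. (\<Sum>i<n. sqrt (a i C)))"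
      by (simp add: sum_distrib_left sum.swap[of _ CC])
    finally have "(\<Sum>i<n. a i B) \<le> sqrt m * (\<Sum>C\<in>CC. (\<Sum>i<n. sqrt (a i C)))" .
    with cs have "(\<Sum>i<n. sqrt (a i B))^2 \<le> sqrt m * (\<Sum>C\<in>CC. (\<Sum>i<n. sqrt (a i C))) * n"
      by (meson mult_right_mono of_nat_0_le_iff order_trans)
    then have "(\<Sum>i<n. sqrt (a i B))^2 / (real n)^2 \<le> sqrt m * (\<Sum>C\<in>CC. (\<Sum>i<n. sqrt (a i C))) * n / (real n)^2"
      by (rule divide_right_mono) simp
    also have "\<dots> = sqrt m * (\<Sum>C\<in>CC. (\<Sum>i<n. sqrt (a i C))) / n"
      using False by (simp add: power2_eq_square)
    also have "\<dots> = sqrt m * (\<Sum>C\<in>CC. 1 / real n * (\<Sum>i<n. sqrt (a i C)))"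
      by (simp add: sum_divide_distrib[symmetric] times_divide_eq_right)
    finally show ?thesis by (simp add: power_divide)
  qed
  have "L^2 \<le> sqrt m * L"
    by (rule LIMSEQ_le[OF tendsto_power[OF lim_B] tendsto_mult[OF tendsto_const lim_A]])
      (use ineq in auto)
  moreover have Lpos: "L > 0" using PBpos by (simp add: L_def)
  ultimately have "L \<le> sqrt m" by (simp add: power2_eq_square)
  then have "L^2 \<le> m" using Lpos
  proof -
    have m0: "m \<ge> 0" using C0 by auto
    have "L^2 \<le> (sqrt m)^2" using power_mono[OF \<open>L \<le> sqrt m\<close>, of 2] Lpos by simp
    then show ?thesis using m0 by simp
  qed
  moreover have "L^2 = PB^3"
  proof -
    have "sqrt PB * sqrt PB = PB" using PBpos by simp
    then show ?thesis unfolding L_def power2_eq_square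
      by (metis (no_types, lifting) mult.assoc mult.commute power3_eq_cube)
  qed
  ultimately show ?thesis using C0 by (auto simp: PB_def)
qed

lemma sum_lessThan_add_split:
  fixes f :: "nat \<Rightarrow> 'b::comm_monoid_add"
  shows "(\<Sum>i<m+n. f i) = (\<Sum>i<m. f i) + (\<Sum>i<n. f (m+i))"
  by (induction n) (simp_all add: add.assoc)

lemma cesaro_periodic:
  fixes f :: "nat \<Rightarrow> real"
  assumes r: "r > 0" and per: "\<And>i. f i = f (i mod r)"
  shows "(\<lambda>n. 1 / real n * (\<Sum>i<n. f i)) \<longlonglongrightarrow> (\<Sum>i<r. f i) / r"
proof -
  define S0 where "S0 = (\<Sum>i<r. f i)"
  define K where "K = (\<Sum>i<r. \<bar>f i\<bar>)"
  have shift: "f (q*r + j) = f j" for q j using per[of "q*r+j"] per[of j] by simp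
  have full: "(\<Sum>i<q*r. f i) = real q * S0" for q
  proof (induction q)
    case 0 then show ?case by simp
  next
    case (Suc q)
    have "(\<Sum>i<Suc q * r. f i) = (\<Sum>i<q*r. f i) + (\<Sum>i<r. f (q*r+i))"
    proof -
      have "Suc q * r = q*r + r" by simp
      then show ?thesis by (simp only: sum_lessThan_add_split)
    qed
    also have "(\<Sum>i<r. f (q*r+i)) = S0" by (simp add: shift S0_def)
    finally show ?case using Suc by (simp add: algebra_simps)
  qed
  define R where "R n = (\<Sum>j<n mod r. f j)" for n
  have decomp: "(\<Sum>i<n. f i) = real (n div r) * S0 + R n" for n
  proof -
    have "n = (n div r) * r + n mod r" by simp
    then have "(\<Sum>i<n. f i) = (\<Sum>i<(n div r) * r + n mod r. f i)" by simp
    also have "\<dots> = (\<Sum>i<(n div r)*r. f i) + (\<Sum>j<n mod r. f ((n div r)*r + j))"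
      by (rule sum_lessThan_add_split)
    also have "\<dots> = real (n div r) * S0 + R n" by (simp add: full shift R_def)
    finally show ?thesis .
  qed
  have Rb: "\<bar>R n\<bar> \<le> K" for n
  proof -
    have "\<bar>R n\<bar> \<le> (\<Sum>j<n mod r. \<bar>f j\<bar>)" unfolding R_def by (rule sum_abs)
    also have "\<dots> \<le> K" unfolding K_def
      using r by (intro sum_mono2) auto
    finally show ?thesis .
  qed
  have S0b: "\<bar>S0\<bar> \<le> K" unfolding S0_def K_def by (rule sum_abs)
  have bound: "norm (1 / real n * (\<Sum>i<n. f i) - S0 / r) \<le> 2 * K / real n" if n: "n > 0" for n
  proof -
    have nr: "real (n div r) * real r = real n - real (n mod r)"
      by (metis div_mult_mod_eq of_nat_add of_nat_mult add_diff_cancel_right')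
    have "1 / real n * (\<Sum>i<n. f i) - S0 / r = R n / n - real (n mod r) * S0 / (real r * real n)"
    proof -
      have nr2: "real (n mod r) + real r * real (n div r) = real n" using nr by (simp add: algebra_simps)
      have "S0 * real (n mod r) + S0 * (real r * real (n div r)) = S0 * real n"
        using nr2 by (metis distrib_left)
      then show ?thesis using n r unfolding decomp by (simp add: field_simps)
    qed
    moreover have b1: "\<bar>real (n mod r) * S0 / (real r * real n)\<bar> \<le> K / n"
    proof -
      have "real (n mod r) \<le> real r" using r by simp
      then have "\<bar>real (n mod r) * S0\<bar> \<le> real r * K"
        using S0b by (simp add: abs_mult mult_mono)
      then show ?thesis using n r by (simp add: field_simps abs_mult abs_divide)
    qed
    moreover have b2: "\<bar>R n / n\<bar> \<le> K / n" using Rb n by (simp add: abs_divide divide_right_mono)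
    ultimately have "norm (1 / real n * (\<Sum>i<n. f i) - S0 / r) \<le> \<bar>R n / n\<bar> + \<bar>real (n mod r) * S0 / (real r * real n)\<bar>"
      by (metis abs_triangle_ineq4 real_norm_def)
    also have "\<dots> \<le> K / n + K / n" using b1 b2 by linarith
    finally show ?thesis by simp
  qed
  have "(\<lambda>n. 1 / real n * (\<Sum>i<n. f i) - S0 / r) \<longlonglongrightarrow> 0"
  proof (rule Lim_null_comparison)
    show "\<forall>\<^sub>F n in sequentially. norm (1 / real n * (\<Sum>i<n. f i) - S0 / r) \<le> 2 * K / real n"
      using eventually_gt_at_top[of 0] by (rule eventually_mono) (rule bound)
    show "(\<lambda>n. 2 * K / real n) \<longlonglongrightarrow> 0" by (rule lim_const_over_n)
  qed
  then have "(\<lambda>n. (1 / real n * (\<Sum>i<n. f i) - S0 / r) + S0 / r) \<longlonglongrightarrow> 0 + S0 / r"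
    by (intro tendsto_add tendsto_const)
  then show ?thesis by (simp add: S0_def)
qed

lemma sep_seq:
  assumes "standard_space M"
  shows "\<exists>U::nat \<Rightarrow> 'a set. (\<forall>k. U k \<in> sets M) \<and>
     (\<forall>x\<in>space M. \<forall>y\<in>space M. x \<noteq> y \<longrightarrow> (\<exists>k. x \<in> U k \<and> y \<notin> U k))"
proof -
  obtain d where ms: "Metric_space (space M) d" and sepa: "separable_space (Metric_space.mtopology (space M) d)"
    and sm: "sets M = sigma_sets (space M) {U. openin (Metric_space.mtopology (space M) d) U}"
    using assms unfolding standard_space_def by blast
  interpret Metric_space "space M" d by (rule ms)
  obtain D where D: "countable D" "D \<subseteq> space M" "mtopology closure_of D = space M"
    using sepa unfolding separable_space_def by auto
  define F where "F = insert {} ((\<lambda>(q,n). mball q (inverse (real (Suc n)))) ` (D \<times> (UNIV::nat set)))"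
  have Fc: "countable F" using D(1) unfolding F_def by auto
  have Fne: "F \<noteq> {}" unfolding F_def by auto
  have Fs: "V \<in> sets M" if "V \<in> F" for V
  proof -
    have "openin mtopology V" using that unfolding F_def by auto
    then show ?thesis unfolding sm by (auto intro: sigma_sets.Basic)
  qed
  define U where "U = from_nat_into F"
  have "\<forall>k. U k \<in> sets M" using from_nat_into[OF Fne] Fs by (auto simp: U_def)
  moreover have "\<exists>k. x \<in> U k \<and> y \<notin> U k" if x: "x \<in> space M" and y: "y \<in> space M" and xy: "x \<noteq> y" for x y
  proof -
    have dpos: "d x y > 0" using x y xy by (simp add: mdist_pos_eq)
    obtain n where n: "inverse (real (Suc n)) < d x y / 2"
      using reals_Archimedean[of "d x y / 2"] dpos by auto
    have "x \<in> mtopology closure_of D" using D(3) x by simp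
    then obtain q where q: "q \<in> D" "q \<in> mball x (inverse (real (Suc n)))"
    proof -
      have "\<forall>r>0. \<exists>y\<in>D. y \<in> mball x r" using \<open>x \<in> mtopology closure_of D\<close>
        unfolding metric_closure_of by blast
      then show ?thesis using that by (meson inverse_positive_iff_positive of_nat_0_less_iff zero_less_Suc)
    qed
    have qs: "q \<in> space M" using q by auto
    have xq: "x \<in> mball q (inverse (real (Suc n)))" using q x qs by (simp add: commute)
    have yq: "y \<notin> mball q (inverse (real (Suc n)))"
    proof
      assume "y \<in> mball q (inverse (real (Suc n)))"
      then have "d q y < inverse (real (Suc n))" by simp
      moreover have "d x y \<le> d x q + d q y" using x y qs triangle by blast
      moreover have "d x q < inverse (real (Suc n))" using q by simp
      ultimately show False using n by linarith
    qed
    have "mball q (inverse (real (Suc n))) \<in> F" using q(1) unfolding F_def by auto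
    then obtain k where "U k = mball q (inverse (real (Suc n)))"
      using range_from_nat_into[OF Fne Fc] unfolding U_def by (metis rangeE)
    then have "x \<in> U k \<and> y \<notin> U k" using xq yq by simp
    then show ?thesis by blast
  qed
  ultimately show ?thesis by blast
qed

primrec cellf :: "'a set \<Rightarrow> (nat \<Rightarrow> 'a set) \<Rightarrow> nat \<Rightarrow> 'a \<Rightarrow> 'a set" where
  "cellf S U 0 x = S"
| "cellf S U (Suc n) x = cellf S U n x \<inter> (if x \<in> U n then U n else S - U n)"

lemma cellf_mem: "y \<in> cellf S U n x \<longleftrightarrow> y \<in> S \<and> (\<forall>k<n. y \<in> U k \<longleftrightarrow> x \<in> U k)"
  by (induction n) (auto simp: less_Suc_eq)

lemma cellf_self: "x \<in> S \<Longrightarrow> x \<in> cellf S U n x"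
  by (simp add: cellf_mem)

lemma cellf_eq: "y \<in> cellf S U n x \<Longrightarrow> cellf S U n y = cellf S U n x"
  by (auto simp: cellf_mem)

lemma cellf_disj: "cellf S U n x = cellf S U n y \<or> cellf S U n x \<inter> cellf S U n y = {}"
  by (auto simp: cellf_mem)

lemma cellf_dec: "cellf S U (Suc n) x \<subseteq> cellf S U n x"
  by auto

lemma cellf_decseq: "decseq (\<lambda>n. cellf S U n x)"
  by (rule decseq_SucI) (rule cellf_dec)

lemma cellf_finite: "finite (cellf S U n ` S)"
proof -
  have "cellf S U n ` S \<subseteq> (\<lambda>K. {y\<in>S. \<forall>k<n. y \<in> U k \<longleftrightarrow> k \<in> K}) ` Pow {..<n}"
  proof
    fix c assume "c \<in> cellf S U n ` S"
    then obtain x where x: "x \<in> S" "c = cellf S U n x" by auto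
    then have "c = (\<lambda>K. {y\<in>S. \<forall>k<n. y \<in> U k \<longleftrightarrow> k \<in> K}) {k. k < n \<and> x \<in> U k}"
      by (auto simp: cellf_mem)
    then show "c \<in> (\<lambda>K. {y\<in>S. \<forall>k<n. y \<in> U k \<longleftrightarrow> k \<in> K}) ` Pow {..<n}"
      by (intro image_eqI[where x="{k. k < n \<and> x \<in> U k}"]) auto
  qed
  then show ?thesis by (rule finite_subset) auto
qed

lemma cellf_sets:
  assumes "\<And>k. U k \<in> sets M"
  shows "cellf (space M) U n x \<in> sets M"
  using assms by (induction n) auto

lemma cellf_Inter:
  assumes "x \<in> S" "\<And>y. y \<in> S \<Longrightarrow> y \<noteq> x \<Longrightarrow> \<exists>k. (x \<in> U k \<and> y \<notin> U k)"
  shows "(\<Inter>n. cellf S U n x) = {x}"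
proof
  show "{x} \<subseteq> (\<Inter>n. cellf S U n x)" using assms(1) by (auto simp: cellf_self)
  show "(\<Inter>n. cellf S U n x) \<subseteq> {x}"
  proof
    fix y assume y: "y \<in> (\<Inter>n. cellf S U n x)"
    then have yS: "y \<in> S" by (auto simp: cellf_mem)
    show "y \<in> {x}"
    proof (rule ccontr)
      assume "y \<notin> {x}"
      then obtain k where "x \<in> U k" "y \<notin> U k" using assms(2)[OF yS] by auto
      moreover have "y \<in> cellf S U (Suc k) x" using y by blast
      ultimately show False by (auto simp: cellf_mem)
    qed
  qed
qed

lemma singleton_sets:
  fixes U :: "nat \<Rightarrow> 'a set"
  assumes U: "\<And>k. U k \<in> sets M"
    and sepU: "\<forall>x\<in>space M. \<forall>y\<in>space M. x \<noteq> y \<longrightarrow> (\<exists>k. x \<in> U k \<and> y \<notin> U k)"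
    and x: "x \<in> space M"
  shows "{x} \<in> sets M"
proof -
  have "(\<Inter>n. cellf (space M) U n x) = {x}"
    by (rule cellf_Inter) (use x sepU in auto)
  moreover have "(\<Inter>n. cellf (space M) U n x) \<in> sets M"
    using cellf_sets[OF U] by auto
  ultimately show ?thesis by simp
qed

declare cellf.simps[simp del]

lemma atom_point:
  fixes U :: "nat \<Rightarrow> 'a set"
  assumes mps: "measure_preserving_system M T" and ci: "cond_i M T B"
    and U: "\<And>k. U k \<in> sets M"
    and sepU: "\<forall>x\<in>space M. \<forall>y\<in>space M. x \<noteq> y \<longrightarrow> (\<exists>k. x \<in> U k \<and> y \<notin> U k)"
  shows "\<exists>x\<in>B. x \<in> space M \<and> measure M {x} > 0"
proof -
  interpret prob_space M using mps_prob[OF mps] .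
  define cell where "cell = cellf (space M) U"
  define \<delta> where "\<delta> = measure M B ^ 3"
  have Bs: "B \<in> sets M" and PBpos: "measure M B > 0" using ci by (auto simp: cond_i_def)
  have Bsp: "B \<subseteq> space M" using Bs sets.sets_into_space by auto
  have dpos: "\<delta> > 0" using PBpos by (simp add: \<delta>_def)
  have cs: "cell n x \<in> sets M" for n x unfolding cell_def by (rule cellf_sets[OF U])
  have cdec: "cell (Suc n) x \<subseteq> cell n x" for n x unfolding cell_def by (rule cellf_dec)
  have cdecseq: "decseq (\<lambda>n. cell n x)" for x unfolding cell_def by (rule cellf_decseq)
  define CC where "CC n = (\<lambda>c. B \<inter> c) ` (cell n ` B)" for n
  have heavy: "\<exists>x\<in>B. measure M (B \<inter> cell n x) \<ge> \<delta>" for n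
  proof -
    have "finite (cell n ` space M)" unfolding cell_def by (rule cellf_finite)
    then have "finite (cell n ` B)" by (rule finite_subset[OF image_mono[OF Bsp]])
    then have fin: "finite (CC n)" unfolding CC_def by (rule finite_imageI)
    have disj: "disjoint (CC n)"
      unfolding disjoint_def pairwise_def disjnt_def
    proof (intro ballI impI)
      fix C1 C2 assume C1: "C1 \<in> CC n" and C2: "C2 \<in> CC n" and ne: "C1 \<noteq> C2"
      obtain x1 where x1: "C1 = B \<inter> cell n x1" using C1 unfolding CC_def by auto
      obtain x2 where x2: "C2 = B \<inter> cell n x2" using C2 unfolding CC_def by auto
      have "cell n x1 \<noteq> cell n x2" using ne x1 x2 by auto
      then have "cell n x1 \<inter> cell n x2 = {}" using cellf_disj[of "space M" U n x1 x2] unfolding cell_def by auto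
      then show "C1 \<inter> C2 = {}" using x1 x2 by auto
    qed
    have sub: "CC n \<subseteq> sets M" using cs Bs by (auto simp: CC_def)
    have un: "\<Union>(CC n) = B"
    proof
      show "\<Union>(CC n) \<subseteq> B"
      proof
        fix y assume "y \<in> \<Union>(CC n)"
        then obtain C where C: "C \<in> CC n" "y \<in> C" by blast
        then obtain c where "C = B \<inter> c" unfolding CC_def by blast
        then show "y \<in> B" using C(2) by blast
      qed
      show "B \<subseteq> \<Union>(CC n)"
      proof
        fix x assume x: "x \<in> B"
        have "x \<in> cell n x" unfolding cell_def by (rule cellf_self) (use x Bsp in blast)
        then have "x \<in> B \<inter> cell n x" using x by blast
        moreover have "B \<inter> cell n x \<in> CC n" unfolding CC_def
          by (rule image_eqI[where x="cell n x"]) (use x in auto)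
        ultimately show "x \<in> \<Union>(CC n)" by blast
      qed
    qed
    obtain C where C: "C \<in> CC n" "measure M C \<ge> measure M B ^ 3"
      using keyP[OF mps ci fin disj sub un] by blast
    then obtain x where x: "x \<in> B" "C = B \<inter> cell n x" unfolding CC_def by blast
    show ?thesis using C(2) x unfolding \<delta>_def by blast
  qed
  define F where "F n = {x\<in>B. measure M (B \<inter> cell n x) \<ge> \<delta>}" for n
  have F_eq: "F n = \<Union>{C \<in> CC n. measure M C \<ge> \<delta>}" for n
  proof
    show "F n \<subseteq> \<Union>{C \<in> CC n. measure M C \<ge> \<delta>}"
    proof
      fix x assume x: "x \<in> F n"
      then have xB: "x \<in> B" and h: "measure M (B \<inter> cell n x) \<ge> \<delta>" by (auto simp: F_def)
      have "x \<in> cell n x" unfolding cell_def by (rule cellf_self) (use xB Bsp in blast)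
      then have "x \<in> B \<inter> cell n x" using xB by blast
      moreover have "B \<inter> cell n x \<in> CC n" unfolding CC_def
        by (rule image_eqI[where x="cell n x"]) (use xB in auto)
      moreover have "B \<inter> cell n x \<in> {C \<in> CC n. measure M C \<ge> \<delta>}" using calculation(2) h by blast
      ultimately show "x \<in> \<Union>{C \<in> CC n. measure M C \<ge> \<delta>}" by blast
    qed
    show "\<Union>{C \<in> CC n. measure M C \<ge> \<delta>} \<subseteq> F n"
    proof
      fix y assume "y \<in> \<Union>{C \<in> CC n. measure M C \<ge> \<delta>}"
      then obtain C where C: "C \<in> CC n" "\<delta> \<le> measure M C" "y \<in> C" by blast
      then obtain x where x0: "x \<in> B" "C = B \<inter> cell n x" unfolding CC_def by blast
      then have x: "x \<in> B" "y \<in> B \<inter> cell n x" "measure M (B \<inter> cell n x) \<ge> \<delta>"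
        using C by blast+
      have "y \<in> cell n x" using x(2) by blast
      then have "cell n y = cell n x" unfolding cell_def by (rule cellf_eq)
      then show "y \<in> F n" using x unfolding F_def by simp
    qed
  qed
  have Fs: "F n \<in> sets M" for n
  proof -
    have "finite (cell n ` space M)" unfolding cell_def by (rule cellf_finite)
    then have "finite (cell n ` B)" by (rule finite_subset[OF image_mono[OF Bsp]])
    then have "finite (CC n)" unfolding CC_def by (rule finite_imageI)
    moreover have "CC n \<subseteq> sets M" using cs Bs by (auto simp: CC_def)
    ultimately show ?thesis unfolding F_eq by (intro sets.finite_Union) auto
  qed
  have Fdec: "decseq F"
  proof (rule decseq_SucI)
    fix n show "F (Suc n) \<subseteq> F n"
    proof
      fix x assume x: "x \<in> F (Suc n)"
      have "measure M (B \<inter> cell (Suc n) x) \<le> measure M (B \<inter> cell n x)"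
        using cs Bs cdec[of n x] by (intro finite_measure_mono) auto
      then show "x \<in> F n" using x by (auto simp: F_def)
    qed
  qed
  have PF: "measure M (F n) \<ge> \<delta>" for n
  proof -
    obtain x where x: "x \<in> B" "measure M (B \<inter> cell n x) \<ge> \<delta>" using heavy by blast
    have "B \<inter> cell n x \<subseteq> F n"
    proof
      fix y assume y: "y \<in> B \<inter> cell n x"
      then have "y \<in> cell n x" by blast
      then have "cell n y = cell n x" unfolding cell_def by (rule cellf_eq)
      then show "y \<in> F n" using x y unfolding F_def by simp
    qed
    then have "measure M (B \<inter> cell n x) \<le> measure M (F n)"
      using Fs by (intro finite_measure_mono) auto
    then show ?thesis using x by simp
  qed
  have "(\<lambda>n. measure M (F n)) \<longlonglongrightarrow> measure M (\<Inter>n. F n)"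
    using Fs Fdec by (intro finite_Lim_measure_decseq) auto
  then have "measure M (\<Inter>n. F n) \<ge> \<delta>"
    by (rule LIMSEQ_le_const) (use PF in auto)
  then have "(\<Inter>n. F n) \<noteq> {}" using dpos by auto
  then obtain x where x: "\<And>n. x \<in> F n" by blast
  have xB: "x \<in> B" using x[of 0] by (simp add: F_def)
  have "(\<lambda>n. measure M (B \<inter> cell n x)) \<longlonglongrightarrow> measure M (\<Inter>n. B \<inter> cell n x)"
  proof (rule finite_Lim_measure_decseq)
    show "range (\<lambda>n. B \<inter> cell n x) \<subseteq> sets M" using cs Bs by auto
    show "decseq (\<lambda>n. B \<inter> cell n x)" using cdecseq[of x] unfolding decseq_def by blast
  qed
  then have "measure M (\<Inter>n. B \<inter> cell n x) \<ge> \<delta>"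
    by (rule LIMSEQ_le_const) (use x in \<open>auto simp: F_def\<close>)
  moreover have "(\<Inter>n. B \<inter> cell n x) = {x}"
  proof -
    have "(\<Inter>n. cell n x) = {x}"
      unfolding cell_def by (rule cellf_Inter) (use xB Bsp sepU in auto)
    then show ?thesis using xB by auto
  qed
  ultimately have "measure M {x} > 0" using dpos by simp
  then show ?thesis using xB Bsp by auto
qed

lemma point_to_periodic:
  assumes erg: "ergodic_system M T" and sing: "\<And>x. x \<in> space M \<Longrightarrow> {x} \<in> sets M"
    and x0: "x0 \<in> space M" "measure M {x0} > 0"
  shows "\<exists>r \<omega>. periodic_with M r \<omega>"
proof -
  have mps: "measure_preserving_system M T" using erg by (simp add: ergodic_system_def)
  interpret prob_space M using mps_prob[OF mps] .
  have Tm: "T \<in> measurable M M" using mps_meas[OF mps] .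
  have Tsp: "y \<in> space M \<Longrightarrow> T y \<in> space M" for y using Tm by (meson measurable_space)
  define m where "m y = measure M {y}" for y
  have mT: "m y \<le> m (T y)" if y: "y \<in> space M" for y
  proof -
    have "measure M {y} \<le> measure M (T -` {T y} \<inter> space M)"
      using y Tsp sing by (intro finite_measure_mono) (auto intro!: measurable_sets[OF Tm])
    also have "\<dots> = measure M {T y}" using mps sing[OF Tsp[OF y]] by (simp add: measure_preserving_system_def)
    finally show ?thesis by (simp add: m_def)
  qed
  define p0 where "p0 = m x0"
  have p0pos: "p0 > 0" using x0 by (simp add: p0_def m_def)
  define H where "H = {y\<in>space M. m y \<ge> p0}"
  have finH: "finite H"
  proof -
    have "card G \<le> nat \<lfloor>1 / p0\<rfloor>" if G: "G \<subseteq> H" "finite G" for G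
    proof -
      have Gs: "G \<subseteq> space M" using G by (auto simp: H_def)
      have "real (card G) * p0 = (\<Sum>y\<in>G. p0)" by simp
      also have "\<dots> \<le> (\<Sum>y\<in>G. m y)" using G by (intro sum_mono) (auto simp: H_def)
      also have "\<dots> = measure M G" unfolding m_def
        using G Gs sing by (intro finite_measure_eq_sum_singleton[symmetric]) auto
      also have "\<dots> \<le> 1" by simp
      finally have "real (card G) * p0 \<le> 1" .
      then have "real (card G) \<le> 1 / p0" using p0pos by (simp add: field_simps)
      then show ?thesis by (simp add: le_nat_floor)
    qed
    then show ?thesis using finite_if_finite_subsets_card_bdd by blast
  qed
  have x0H: "x0 \<in> H" using x0 by (simp add: H_def p0_def)
  define c where "c = Max (m ` H)"
  have cge: "y \<in> H \<Longrightarrow> m y \<le> c" for y using finH by (simp add: c_def)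
  have cin: "c \<in> m ` H" using finH x0H unfolding c_def by (intro Max_in) auto
  have cp0: "c \<ge> p0" using cge[OF x0H] by (simp add: p0_def)
  define Z where "Z = {y\<in>space M. m y = c}"
  have ZH: "Z \<subseteq> H" using cp0 by (auto simp: Z_def H_def)
  have finZ: "finite Z" using finite_subset[OF ZH finH] .
  have Zne: "Z \<noteq> {}" using cin by (auto simp: Z_def H_def)
  have Zsp: "Z \<subseteq> space M" by (auto simp: Z_def)
  have TZ: "T y \<in> Z" if "y \<in> Z" for y
  proof -
    have y: "y \<in> space M" "m y = c" using that by (auto simp: Z_def)
    have "m (T y) \<ge> c" using mT[OF y(1)] y(2) by simp
    then have "T y \<in> H" using cp0 Tsp[OF y(1)] by (simp add: H_def)
    then have "m (T y) \<le> c" by (rule cge)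
    then show ?thesis using \<open>m (T y) \<ge> c\<close> Tsp[OF y(1)] by (simp add: Z_def)
  qed
  have Zs: "Z \<in> sets M"
  proof (rule sets.countable)
    show "\<And>a. a \<in> Z \<Longrightarrow> {a} \<in> sets M" using Zsp sing by blast
    show "countable Z" using finZ by (rule countable_finite)
  qed
  define E where "E n = (T^^n) -` Z \<inter> space M" for n
  have Es: "E n \<in> sets M" for n unfolding E_def by (rule funpow_sets[OF mps Zs])
  have Einc: "incseq E"
  proof (rule incseq_SucI)
    fix n show "E n \<subseteq> E (Suc n)"
    proof
      fix y assume "y \<in> E n"
      then have "(T^^n) y \<in> Z" "y \<in> space M" by (auto simp: E_def)
      then have "(T^^Suc n) y \<in> Z" "y \<in> space M" using TZ by auto
      then show "y \<in> E (Suc n)" by (simp only: E_def vimage_eq Int_iff) 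
    qed
  qed
  define A where "A = (\<Union>n. E n)"
  have As: "A \<in> sets M" using Es by (auto simp: A_def)
  have inv: "T -` A \<inter> space M = A"
  proof (intro set_eqI iffI)
    fix y assume "y \<in> T -` A \<inter> space M"
    then obtain n where "(T^^n) (T y) \<in> Z" "y \<in> space M" by (auto simp: A_def E_def)
    then have "(T^^Suc n) y \<in> Z" "y \<in> space M" by (simp_all add: funpow_swap1)
    then have "y \<in> E (Suc n)" by (simp add: E_def)
    then show "y \<in> A" unfolding A_def by blast
  next
    fix y assume "y \<in> A"
    then obtain n where n: "(T^^n) y \<in> Z" "y \<in> space M" by (auto simp: A_def E_def)
    then have "(T^^Suc n) y \<in> Z" using TZ by simp
    then have "(T^^n) (T y) \<in> Z" by (simp add: funpow_swap1)
    then have "T y \<in> E n" using n Tsp by (simp add: E_def)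
    then show "y \<in> T -` A \<inter> space M" using n unfolding A_def by blast
  qed
  have PZ: "measure M Z = real (card Z) * c"
  proof -
    have "measure M Z = (\<Sum>y\<in>Z. m y)" unfolding m_def
      using finZ Zsp sing by (intro finite_measure_eq_sum_singleton) auto
    also have "\<dots> = (\<Sum>y\<in>Z. c)" by (intro sum.cong) (auto simp: Z_def)
    finally show ?thesis by simp
  qed
  have PZpos: "measure M Z > 0" using PZ Zne finZ cp0 p0pos
    by (simp add: card_gt_0_iff)
  have "measure M Z \<le> measure M A"
  proof (rule finite_measure_mono)
    show "Z \<subseteq> A" unfolding A_def
    proof
      fix y assume "y \<in> Z"
      then have "y \<in> E 0" using Zsp by (auto simp: E_def)
      then show "y \<in> (\<Union>n. E n)" by blast
    qed
  qed (rule As)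
  then have "measure M A \<noteq> 0" using PZpos by auto
  then have PA: "measure M A = 1" using erg As inv unfolding ergodic_system_def by blast
  have "(\<lambda>n. measure M (E n)) \<longlonglongrightarrow> measure M A"
    unfolding A_def using Es Einc by (intro finite_Lim_measure_incseq) auto
  moreover have "measure M (E n) = measure M Z" for n unfolding E_def by (rule mps_funpow[OF mps Zs])
  ultimately have "measure M Z = 1" using PA by (simp add: LIMSEQ_const_iff)
  then have prod1: "real (card Z) * c = 1" using PZ by simp
  have cpos: "card Z > 0" using finZ Zne by (simp add: card_gt_0_iff)
  have cZ: "c = 1 / real (card Z)" using prod1 cpos by (simp add: eq_divide_eq mult.commute)
  obtain h where h: "bij_betw h {1..card Z} Z" using ex_bij_betw_nat_finite_1[OF finZ] by blast
  have "periodic_with M (card Z) h"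
    unfolding periodic_with_def
  proof (intro conjI ballI)
    show "1 \<le> card Z" using cpos by simp
    show "inj_on h {1..card Z}" using h by (simp add: bij_betw_def)
    fix i assume i: "i \<in> {1..card Z}"
    then have "h i \<in> Z" using h by (auto simp: bij_betw_def)
    then have "h i \<in> space M" "m (h i) = c" unfolding Z_def by auto
    then show "h i \<in> space M" "measure M {h i} = 1 / real (card Z)"
      using cZ by (simp_all add: m_def)
  qed
  then show ?thesis by blast
qed

lemma funpow_mult_fix: "(f^^p) y = y \<Longrightarrow> (f^^(q*p)) y = y"
proof (induction q)
  case 0 then show ?case by simp
next
  case (Suc q)
  have "(f^^(Suc q * p)) y = (f^^p) ((f^^(q*p)) y)" by (simp add: funpow_add)
  then show ?case using Suc by simp
qed

lemma funpow_mod_fix: "(f^^p) y = y \<Longrightarrow> (f^^i) y = (f^^(i mod p)) y"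
proof -
  assume h: "(f^^p) y = y"
  have "(f^^i) y = (f^^(i mod p + (i div p) * p)) y" by (simp only: mod_div_mult_eq)
  also have "\<dots> = (f^^(i mod p)) ((f^^((i div p) * p)) y)" by (simp only: funpow_add o_apply)
  also have "\<dots> = (f^^(i mod p)) y" using funpow_mult_fix[OF h] by simp
  finally show ?thesis .
qed

locale percyc =
  fixes M :: "'a measure" and T :: "'a \<Rightarrow> 'a" and r :: nat and \<omega> :: "nat \<Rightarrow> 'a"
  assumes erg: "ergodic_system M T" and per: "periodic_with M r \<omega>"
begin

definition "S = \<omega> ` {1..r}"

lemma mps: "measure_preserving_system M T" using erg by (simp add: ergodic_system_def)

sublocale prob_space M using mps_prob[OF mps] .

lemma Tm: "T \<in> measurable M M" using mps_meas[OF mps] .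
lemma Tsp: "y \<in> space M \<Longrightarrow> T y \<in> space M" using Tm by (meson measurable_space)

lemma r_pos: "r > 0" using per by (simp add: periodic_with_def)
lemma finS: "finite S" by (simp add: S_def)
lemma cardS: "card S = r" using per by (simp add: S_def periodic_with_def card_image)
lemma Ssp: "S \<subseteq> space M" using per by (auto simp: S_def periodic_with_def)
lemma Smeas: "y \<in> S \<Longrightarrow> measure M {y} = 1 / real r" using per by (auto simp: S_def periodic_with_def)
lemma Ssing: "y \<in> S \<Longrightarrow> {y} \<in> sets M"
proof (rule ccontr)
  assume y: "y \<in> S" and n: "{y} \<notin> sets M"
  have "measure M {y} = 0" using n by (rule measure_notin_sets)
  moreover have "measure M {y} > 0" using Smeas[OF y] r_pos by simp
  ultimately show False by simp
qed

lemma subS_sets: "E \<subseteq> S \<Longrightarrow> E \<in> sets M"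
proof (rule sets.countable)
  assume E: "E \<subseteq> S"
  show "{a} \<in> sets M" if "a \<in> E" for a using Ssing that E by blast
  show "countable E" using finite_subset[OF E finS] by (rule countable_finite)
qed

lemma measS_sub: "E \<subseteq> S \<Longrightarrow> measure M E = real (card E) / real r"
proof -
  assume E: "E \<subseteq> S"
  have fE: "finite E" using finite_subset[OF E finS] .
  have "measure M E = (\<Sum>y\<in>E. measure M {y})"
    using fE E Ssing by (intro finite_measure_eq_sum_singleton) auto
  also have "\<dots> = (\<Sum>y\<in>E. 1 / real r)" using E Smeas by (intro sum.cong) auto
  finally show ?thesis by simp
qed

lemma PS: "measure M S = 1" using measS_sub[of S] cardS r_pos by simp

lemma meas_formula: "E \<in> sets M \<Longrightarrow> measure M E = real (card (E \<inter> S)) / real r"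
proof -
  assume E: "E \<in> sets M"
  have Ss: "S \<in> sets M" by (rule subS_sets) simp
  have "measure M E \<le> measure M ((E \<inter> S) \<union> (space M - S))"
    using E Ss sets.sets_into_space by (intro finite_measure_mono) auto
  also have "\<dots> \<le> measure M (E \<inter> S) + measure M (space M - S)"
    using E Ss by (intro measure_Un_le) auto
  also have "measure M (space M - S) = 0" using prob_compl[OF Ss] PS by simp
  finally have "measure M E \<le> measure M (E \<inter> S)" by simp
  moreover have "measure M (E \<inter> S) \<le> measure M E" using E Ss by (intro finite_measure_mono) auto
  ultimately show ?thesis using measS_sub[of "E \<inter> S"] by simp
qed

lemma card_full: "E \<in> sets M \<Longrightarrow> measure M E = 1 \<Longrightarrow> S \<subseteq> E"
proof -
  assume E: "E \<in> sets M" "measure M E = 1"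
  then have "card (E \<inter> S) = r" using meas_formula[OF E(1)] r_pos by (simp add: field_simps)
  then have "E \<inter> S = S" using finS cardS by (metis Int_lower2 card_subset_eq)
  then show ?thesis by blast
qed

lemma TS: "y \<in> S \<Longrightarrow> T y \<in> S"
proof -
  assume y: "y \<in> S"
  have Ss: "S \<in> sets M" by (rule subS_sets) simp
  have "measure M (T -` S \<inter> space M) = 1" using mps Ss PS by (simp add: measure_preserving_system_def)
  then have "S \<subseteq> T -` S \<inter> space M" using Ss by (intro card_full) (auto intro!: measurable_sets[OF Tm])
  then show ?thesis using y by auto
qed

lemma T_inj: "inj_on T S"
proof
  fix y z assume y: "y \<in> S" and z: "z \<in> S" and eq: "T y = T z"
  define x where "x = T y"
  have xS: "x \<in> S" using TS[OF y] by (simp add: x_def)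
  have pre: "T -` {x} \<inter> space M \<in> sets M" using Ssing[OF xS] by (auto intro!: measurable_sets[OF Tm])
  have "measure M (T -` {x} \<inter> space M) = 1 / real r"
    using mps Ssing[OF xS] Smeas[OF xS] by (simp add: measure_preserving_system_def)
  then have "card ((T -` {x} \<inter> space M) \<inter> S) = 1" using meas_formula[OF pre] r_pos
    by (simp add: field_simps)
  moreover have "y \<in> (T -` {x} \<inter> space M) \<inter> S" "z \<in> (T -` {x} \<inter> space M) \<inter> S"
    using y z eq Ssp by (auto simp: x_def)
  ultimately show "y = z" using finS by (metis card_1_singletonE singletonD)
qed

lemma TnS: "y \<in> S \<Longrightarrow> (T^^n) y \<in> S"
  by (induction n) (auto simp: TS)

lemma Tn_inj: "inj_on (T^^n) S"
proof (induction n)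
  case 0 then show ?case by simp
next
  case (Suc n)
  have "inj_on ((T^^n) \<circ> T) S"
  proof (rule comp_inj_on[OF T_inj])
    show "inj_on (T^^n) (T ` S)" using Suc by (rule inj_on_subset) (auto simp: TS)
  qed
  then show ?case by (simp only: funpow_Suc_right)
qed

lemma cancel: "y \<in> S \<Longrightarrow> a < b \<Longrightarrow> (T^^a) y = (T^^b) y \<Longrightarrow> (T^^(b-a)) y = y"
proof -
  assume y: "y \<in> S" and ab: "a < b" and eq: "(T^^a) y = (T^^b) y"
  have "(T^^a) ((T^^(b-a)) y) = (T^^b) y" using ab by (simp add: funpow_add[symmetric, THEN fun_cong, simplified])
  then have "(T^^a) ((T^^(b-a)) y) = (T^^a) y" using eq by simp
  then show ?thesis using Tn_inj[of a] y TnS[OF y] by (meson inj_onD)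
qed

lemma periodic_pt: "y \<in> S \<Longrightarrow> \<exists>p>0. (T^^p) y = y"
proof -
  assume y: "y \<in> S"
  have "(\<lambda>j. (T^^j) y) ` {..r} \<subseteq> S" using TnS[OF y] by auto
  then have "card ((\<lambda>j. (T^^j) y) ` {..r}) \<le> r" using finS cardS by (metis card_mono)
  then have "\<not> inj_on (\<lambda>j. (T^^j) y) {..r}" by (intro pigeonhole) simp
  then obtain a b where ab: "a \<noteq> b" "(T^^a) y = (T^^b) y" unfolding inj_on_def by blast
  show ?thesis
  proof (cases "a < b")
    case True then show ?thesis using cancel[OF y True ab(2)] by (intro exI[of _ "b-a"]) auto
  next
    case False then have "b < a" using ab by simp
    then show ?thesis using cancel[OF y \<open>b < a\<close> ab(2)[symmetric]] by (intro exI[of _ "a-b"]) auto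
  qed
qed

lemma orbit: "x \<in> S \<Longrightarrow> y \<in> S \<Longrightarrow> \<exists>j. x = (T^^j) y"
proof -
  assume x: "x \<in> S" and y: "y \<in> S"
  define Orb where "Orb = range (\<lambda>i. (T^^i) y)"
  have OS: "Orb \<subseteq> S" using TnS[OF y] by (auto simp: Orb_def)
  have Os: "Orb \<in> sets M" using OS by (rule subS_sets)
  define A where "A = (\<Union>n. (T^^n) -` Orb \<inter> space M)"
  have As: "A \<in> sets M" unfolding A_def
    by (rule sets.countable_UN) (use funpow_sets[OF mps Os] in blast)
  have TO: "z \<in> Orb \<Longrightarrow> T z \<in>  Orb" for z
    by (auto simp: Orb_def) (metis funpow.simps(2) o_apply rangeI)
  have inv: "T -` A \<inter> space M = A"
  proof (intro set_eqI iffI)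
    fix z assume "z \<in> T -` A \<inter> space M"
    then obtain n where "(T^^n) (T z) \<in>  Orb" "z \<in> space M" by (auto simp: A_def)
    then have "(T^^Suc n) z \<in>  Orb" "z \<in> space M" by (simp_all add: funpow_swap1)
    then show "z \<in> A" unfolding A_def by blast
  next
    fix z assume "z \<in> A"
    then obtain n where n: "(T^^n) z \<in>  Orb" "z \<in> space M" by (auto simp: A_def)
    then have "(T^^Suc n) z \<in>  Orb" using TO by simp
    then have "(T^^n) (T z) \<in>  Orb" by (simp add: funpow_swap1)
    then show "z \<in> T -` A \<inter> space M" using n Tsp unfolding A_def by blast
  qed
  have "y \<in> A" using y Ssp unfolding A_def Orb_def by (auto intro!: exI[of _ 0] rangeI[of _ 0])
  then have "measure M {y} \<le> measure M A" using As Ssing[OF y] by (intro finite_measure_mono) auto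
  then have "measure M A \<noteq> 0" using Smeas[OF y] r_pos by auto
  then have "measure M A = 1" using erg As inv unfolding ergodic_system_def by blast
  then have "x \<in> A" using card_full[OF As] x by auto
  then obtain n j where nj: "(T^^n) x = (T^^j) y" unfolding A_def Orb_def by auto
  obtain p where p: "p > 0" "(T^^p) x = x" using periodic_pt[OF x] by blast
  have "x = (T^^(p*n)) x" using funpow_mult_fix[OF p(2), of n] by (simp add: mult.commute)
  also have "\<dots> = (T^^(p*n - n)) ((T^^n) x)"
  proof -
    have "p*n = (p*n - n) + n" using p(1) by (simp add: mult_le_cancel2)
    then show ?thesis by (metis funpow_add o_apply)
  qed
  also have "\<dots> = (T^^(p*n - n + j)) y" using nj by (simp add: funpow_add)
  finally show ?thesis by blast
qed

end

context percyc begin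

lemma period_r: "y \<in> S \<Longrightarrow> (T^^r) y = y \<and> bij_betw (\<lambda>j. (T^^j) y) {..<r} S"
proof -
  assume y: "y \<in> S"
  define p where "p = (LEAST p. p > 0 \<and> (T^^p) y = y)"
  have pp: "p > 0 \<and> (T^^p) y = y" unfolding p_def using periodic_pt[OF y] by (rule LeastI_ex)
  have inj: "inj_on (\<lambda>j. (T^^j) y) {..<p}"
  proof (rule ccontr)
    assume "\<not> inj_on (\<lambda>j. (T^^j) y) {..<p}"
    then obtain a b where ab: "a < p" "b < p" "a \<noteq> b" "(T^^a) y = (T^^b) y"
      unfolding inj_on_def by auto
    have "\<exists>c. 0 < c \<and> c < p \<and> (T^^c) y = y"
    proof (cases "a < b")
      case True then show ?thesis using cancel[OF y True ab(4)] ab by (intro exI[of _ "b-a"]) auto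
    next
      case False then have "b < a" using ab by simp
      then show ?thesis using cancel[OF y \<open>b < a\<close> ab(4)[symmetric]] ab by (intro exI[of _ "a-b"]) auto
    qed
    then obtain c where "0 < c" "c < p" "(T^^c) y = y" by blast
    then show False using not_less_Least[of c "\<lambda>p. p > 0 \<and> (T^^p) y = y"] unfolding p_def by blast
  qed
  have img: "(\<lambda>j. (T^^j) y) ` {..<p} = S"
  proof
    show "(\<lambda>j. (T^^j) y) ` {..<p} \<subseteq> S" using TnS[OF y] by auto
    show "S \<subseteq> (\<lambda>j. (T^^j) y) ` {..<p}"
    proof
      fix x assume x: "x \<in> S"
      obtain j where "x = (T^^j) y" using orbit[OF x y] by blast
      then have "x = (T^^(j mod p)) y" using funpow_mod_fix[where f=T and p=p and y=y and i=j] pp by simp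
      moreover have "j mod p < p" using pp by simp
      ultimately show "x \<in> (\<lambda>j. (T^^j) y) ` {..<p}" by blast
    qed
  qed
  have bij: "bij_betw (\<lambda>j. (T^^j) y) {..<p} S" using inj img by (simp add: bij_betw_def)
  then have "p = r" using bij_betw_same_card[OF bij] cardS by simp
  then show ?thesis using bij pp by simp
qed

lemma Tn_mod: "y \<in> S \<Longrightarrow> (T^^i) y = (T^^(i mod r)) y"
  using period_r funpow_mod_fix by metis

lemma core:
  assumes Bs: "B \<in> sets M" and xB: "x \<in> B" and xS: "x \<in> S"
  shows "(\<lambda>n. 1 / real n * (\<Sum>i<n. sqrt (measure M (B \<inter> ((T^^i) -` {x} \<inter> space M)))))
           \<longlonglongrightarrow> sqrt (1 / real r) * real (card (B \<inter> S)) / real r"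
proof -
  define G where "G i = {y \<in> B \<inter> S. (T^^i) y = x}" for i
  have finG: "finite (G i)" for i using finS by (auto simp: G_def)
  have eqG: "B \<inter> ((T^^i) -` {x} \<inter> space M) \<inter> S = G i" for i using Ssp by (auto simp: G_def)
  have measG: "measure M (B \<inter> ((T^^i) -` {x} \<inter> space M)) = real (card (G i)) / real r" for i
  proof -
    have "B \<inter> ((T^^i) -` {x} \<inter> space M) \<in> sets M"
      using Bs funpow_sets[OF mps Ssing[OF xS]] by auto
    then show ?thesis using meas_formula eqG by simp
  qed
  have cardG: "card (G i) \<le> 1" for i
  proof -
    have "\<forall>y\<in>G i. \<forall>z\<in>G i. y = z"
      using Tn_inj[of i] unfolding G_def inj_on_def by auto
    then show ?thesis using card_le_Suc0_iff_eq[OF finG] by simp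
  qed
  define f where "f i = sqrt (measure M (B \<inter> ((T^^i) -` {x} \<inter> space M)))" for i
  have f_eq: "f i = real (card (G i)) * sqrt (1 / real r)" for i
  proof -
    have "card (G i) = 0 \<or> card (G i) = 1" using cardG[of i] by linarith
    then show ?thesis unfolding f_def measG by (auto simp: real_sqrt_divide)
  qed
  have Gper: "G i = G (i mod r)" for i
  proof -
    have "y \<in> S \<Longrightarrow> ((T^^i) y = x) = ((T^^(i mod r)) y = x)" for y
      using Tn_mod[of y i] by simp
    then show ?thesis unfolding G_def by blast
  qed
  have fper: "f i = f (i mod r)" for i using f_eq Gper by metis
  have count1: "card {i \<in> {..<r}. (T^^i) y = x} = 1" if y: "y \<in> S" for y
  proof -
    have bij: "bij_betw (\<lambda>j. (T^^j) y) {..<r} S" using period_r[OF y] by simp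
    have "x \<in> (\<lambda>j. (T^^j) y) ` {..<r}" using bij xS by (simp add: bij_betw_def)
    then obtain j where j0: "j \<in> {..<r}" "x = (T^^j) y" by blast
    then have j: "j < r" "(T^^j) y = x" by auto
    have "{i \<in> {..<r}. (T^^i) y = x} = {j}"
    proof (intro set_eqI iffI)
      fix i assume "i \<in> {i \<in> {..<r}. (T^^i) y = x}"
      then show "i \<in> {j}" using bij j unfolding bij_betw_def inj_on_def by auto
    qed (use j in auto)
    then show ?thesis by simp
  qed
  have sumG: "(\<Sum>i<r. card (G i)) = card (B \<inter> S)"
  proof -
    have "(\<Sum>i<r. card (G i)) = (\<Sum>i<r. \<Sum>y\<in>B \<inter> S. if (T^^i) y = x then 1 else 0)"
    proof (intro sum.cong refl)
      fix i
      have fBS: "finite (B \<inter> S)" using finS by simp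
      show "card (G i) = (\<Sum>y\<in>B \<inter> S. if (T^^i) y = x then 1 else 0)"
        unfolding G_def card_eq_sum sum.inter_filter[OF fBS] by simp
    qed
    also have "\<dots> = (\<Sum>y\<in>B \<inter> S. \<Sum>i<r. if (T^^i) y = x then 1 else 0)" by (rule sum.swap)
    also have "\<dots> = (\<Sum>y\<in>B \<inter> S. card {i \<in> {..<r}. (T^^i) y = x})"
    proof (intro sum.cong refl)
      fix y
      have fr: "finite {..<r}" by simp
      show "(\<Sum>i<r. if (T^^i) y = x then 1 else 0) = card {i \<in> {..<r}. (T^^i) y = x}"
        unfolding card_eq_sum sum.inter_filter[OF fr] by simp
    qed
    also have "\<dots> = (\<Sum>y\<in>B \<inter> S. 1)" using count1 by (intro sum.cong) auto
    finally show ?thesis by simp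
  qed
  have "(\<lambda>n. 1 / real n * (\<Sum>i<n. f i)) \<longlonglongrightarrow> (\<Sum>i<r. f i) / r"
    by (rule cesaro_periodic[where f=f, OF r_pos fper])
  moreover have "(\<Sum>i<r. f i) = sqrt (1 / real r) * real (card (B \<inter> S))"
  proof -
    have "(\<Sum>i<r. f i) = (\<Sum>i<r. real (card (G i))) * sqrt (1 / real r)"
      unfolding f_eq by (simp add: sum_distrib_right)
    also have "(\<Sum>i<r. real (card (G i))) = real (card (B \<inter> S))"
      using sumG by (metis of_nat_sum)
    finally show ?thesis by simp
  qed
  ultimately show ?thesis unfolding f_def by simp
qed

end

theorem proposition6p4:
  fixes M :: "'a measure" and T :: "'a \<Rightarrow> 'a"
  assumes "ergodic_system M T" and "standard_space M"
  shows "((\<exists>B. cond_i M T B) \<longleftrightarrow> (\<exists>r \<omega>. periodic_with M r \<omega>)) \<and>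
         (\<forall>B r \<omega>. cond_i M T B \<longrightarrow> periodic_with M r \<omega> \<longrightarrow> real r = 1 / measure M B)"
proof -
  have erg: "ergodic_system M T" by fact
  have mps: "measure_preserving_system M T" using erg by (simp add: ergodic_system_def)
  obtain U :: "nat \<Rightarrow> 'a set" where U: "\<forall>k. U k \<in> sets M"
    and sepU: "\<forall>x\<in>space M. \<forall>y\<in>space M. x \<noteq> y \<longrightarrow> (\<exists>k. x \<in> U k \<and> y \<notin> U k)"
    using sep_seq[OF assms(2)] by blast
  have sing: "\<And>x. x \<in> space M \<Longrightarrow> {x} \<in> sets M"
    using singleton_sets[of U M] U sepU by blast
  have part1: "\<exists>r \<omega>. periodic_with M r \<omega>" if ci: "cond_i M T B" for B
  proof -
    obtain x where x: "x \<in> B" "x \<in> space M" "measure M {x} > 0"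
      using atom_point[OF mps ci, of U] U sepU by blast
    show ?thesis by (rule point_to_periodic[OF erg sing x(2,3)])
  qed
  have part2: "\<exists>B. cond_i M T B" if per: "periodic_with M r \<omega>" for r \<omega>
  proof -
    interpret percyc M T r \<omega> by unfold_locales (rule erg, rule per)
    define x where "x = \<omega> 1"
    have xS: "x \<in> S" unfolding S_def x_def using r_pos by auto
    have Bs: "{x} \<in> sets M" by (rule Ssing[OF xS])
    have PB: "measure M {x} = 1 / real r" by (rule Smeas[OF xS])
    have "cond_i M T {x}"
      unfolding cond_i_def
    proof (intro conjI ballI impI)
      show "{x} \<in> sets M" by (rule Bs)
      show "measure M {x} > 0" using PB r_pos by simp
      fix C assume C: "C \<in> sets M" "C \<subseteq> {x}"
      show "(\<lambda>n. 1 / real n * (\<Sum>i<n. sqrt (measure M ({x} \<inter> ((T ^^ i) -` C \<inter> space M)))))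
            \<longlonglongrightarrow> sqrt (measure M {x}) * measure M C"
      proof (cases "C = {}")
        case True then show ?thesis by simp
      next
        case False
        then have Cx: "C = {x}" using C(2) by blast
        have "card ({x} \<inter> S) = 1" using xS by simp
        then show ?thesis using core[OF Bs _ xS] unfolding Cx PB by simp
      qed
    qed
    then show ?thesis by blast
  qed
  have part3: "real r = 1 / measure M B" if ci: "cond_i M T B" and per: "periodic_with M r \<omega>" for B r \<omega>
  proof -
    interpret percyc M T r \<omega> by unfold_locales (rule erg, rule per)
    have Bs: "B \<in> sets M" and PBpos: "measure M B > 0" using ci by (auto simp: cond_i_def)
    define k where "k = real (card (B \<inter> S))"
    have PB: "measure M B = k / real r" unfolding k_def by (rule meas_formula[OF Bs])
    have kpos: "k > 0" using PB PBpos r_pos by (simp add: zero_less_divide_iff)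
    then have "B \<inter> S \<noteq> {}" unfolding k_def by auto
    then obtain x where xB: "x \<in> B" and xS: "x \<in> S" by blast
    have xs: "{x} \<in> sets M" by (rule Ssing[OF xS])
    have lim1: "(\<lambda>n. 1 / real n * (\<Sum>i<n. sqrt (measure M (B \<inter> ((T ^^ i) -` {x} \<inter> space M)))))
            \<longlonglongrightarrow> sqrt (measure M B) * measure M {x}"
      using ci xs xB unfolding cond_i_def by blast
    have lim2: "(\<lambda>n. 1 / real n * (\<Sum>i<n. sqrt (measure M (B \<inter> ((T ^^ i) -` {x} \<inter> space M)))))
            \<longlonglongrightarrow> sqrt (1 / real r) * k / real r"
      unfolding k_def by (rule core[OF Bs xB xS])
    have eq: "sqrt (k / real r) * (1 / real r) = sqrt (1 / real r) * k / real r"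
      using LIMSEQ_unique[OF lim1 lim2] PB Smeas[OF xS] by simp
    have rp: "real r > 0" using r_pos by simp
    have "sqrt k = k"
    proof -
      have "sqrt (k / real r) = sqrt (1 / real r) * k" using eq rp by (simp add: field_simps)
      then have "sqrt k / sqrt (real r) = k / sqrt (real r)" by (simp add: real_sqrt_divide)
      then show ?thesis using rp by (simp add: divide_cancel_right)
    qed
    then have "k = 1" using kpos
      by (metis abs_of_pos mult_cancel_left1 real_sqrt_abs2 real_sqrt_mult_self real_sqrt_one less_irrefl)
    then show ?thesis using PB rp by simp
  qed
  show ?thesis using part1 part2 part3 by blast
qed

end
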